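(* Let $G$ be a graph on $\{1,\dots,n\}$, $(S_1,\dots,S_n)$ a realization of $G$, and $w\in\mathbb{R}^n_{\ge0}$. For positive integers $k$ define $\beta(G,w,k)=\max_\rho\sum_{i=1}^nw_i|\operatorname{tr}(\rho S_i)|^k$, maximum over density matrices $\rho$. Then $\lim_{k\to\infty}\beta(G,w,k)=\alpha(G,w)$.
   Context: A realization of $G$ is a tuple of Pauli strings (tensor products of matrices from $\{I,X,Y,Z\}$) of common length with $S_i,S_j$ anticommuting iff $i\sim j$ in $G$ and commuting otherwise. $\alpha(G,w)=\max\{\sum_{i\in I}w_i:I\text{ an independent set of }G\}$. *)

theory Defs
  imports Complex_Main "Jordan_Normal_Form.Matrix"
begin

datatype pauli = PI | PX | PY | PZ

definition pauli_mat :: "pauli \<Rightarrow> complex mat" where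
  "pauli_mat p = (case p of
      PI \<Rightarrow> mat_of_rows_list 2 [[1, 0], [0, 1]]
    | PX \<Rightarrow> mat_of_rows_list 2 [[0, 1], [1, 0]]
    | PY \<Rightarrow> mat_of_rows_list 2 [[0, -\<i>], [\<i>, 0]]
    | PZ \<Rightarrow> mat_of_rows_list 2 [[1, 0], [0, -1]])"

definition kron :: "complex mat \<Rightarrow> complex mat \<Rightarrow> complex mat" where
  "kron A B = mat (dim_row A * dim_row B) (dim_col A * dim_col B)
     (\<lambda>(i, j). A $$ (i div dim_row B, j div dim_col B) * B $$ (i mod dim_row B, j mod dim_col B))"

definition pauli_string_mat :: "pauli list \<Rightarrow> complex mat" where
  "pauli_string_mat ps = foldr (\<lambda>p M. kron (pauli_mat p) M) ps (1\<^sub>m 1)"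

definition is_graph :: "nat \<Rightarrow> (nat \<Rightarrow> nat \<Rightarrow> bool) \<Rightarrow> bool" where
  "is_graph n E \<longleftrightarrow> (\<forall>i<n. \<forall>j<n. E i j \<longleftrightarrow> E j i) \<and> (\<forall>i<n. \<not> E i i)"

definition realization :: "nat \<Rightarrow> (nat \<Rightarrow> nat \<Rightarrow> bool) \<Rightarrow> (nat \<Rightarrow> pauli list) \<Rightarrow> bool" where
  "realization n E S \<longleftrightarrow>
     (\<exists>m. \<forall>i<n. length (S i) = m) \<and>
     (\<forall>i<n. \<forall>j<n.
        (E i j \<longrightarrow> pauli_string_mat (S i) * pauli_string_mat (S j)
                    = - (pauli_string_mat (S j) * pauli_string_mat (S i))) \<and>
        (\<not> E i j \<longrightarrow> pauli_string_mat (S i) * pauli_string_mat (S j)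
                    = pauli_string_mat (S j) * pauli_string_mat (S i)))"

definition mtrace :: "complex mat \<Rightarrow> complex" where
  "mtrace A = (\<Sum>i<dim_row A. A $$ (i, i))"

definition density_matrix :: "nat \<Rightarrow> complex mat \<Rightarrow> bool" where
  "density_matrix d \<rho> \<longleftrightarrow>
     \<rho> \<in> carrier_mat d d \<and>
     (\<forall>i<d. \<forall>j<d. \<rho> $$ (j, i) = cnj (\<rho> $$ (i, j))) \<and>
     (\<forall>v \<in> carrier_vec d. Re (\<Sum>i<d. cnj (v $ i) * (\<rho> *\<^sub>v v) $ i) \<ge> 0) \<and>
     mtrace \<rho> = 1"

definition beta :: "nat \<Rightarrow> (nat \<Rightarrow> pauli list) \<Rightarrow> (nat \<Rightarrow> real) \<Rightarrow> nat \<Rightarrow> real" where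
  "beta n S w k = Sup {(\<Sum>i<n. w i * cmod (mtrace (\<rho> * pauli_string_mat (S i))) ^ k) | \<rho>.
       density_matrix (2 ^ length (S 0)) \<rho>}"

definition independent_set :: "nat \<Rightarrow> (nat \<Rightarrow> nat \<Rightarrow> bool) \<Rightarrow> nat set \<Rightarrow> bool" where
  "independent_set n E I \<longleftrightarrow> I \<subseteq> {0..<n} \<and> (\<forall>i\<in>I. \<forall>j\<in>I. \<not> E i j)"

definition alpha :: "nat \<Rightarrow> (nat \<Rightarrow> nat \<Rightarrow> bool) \<Rightarrow> (nat \<Rightarrow> real) \<Rightarrow> real" where
  "alpha n E w = Max {(\<Sum>i\<in>I. w i) | I. independent_set n E I}"

end

theory Submission
  imports Defs
begin
definition herm :: "complex mat \<Rightarrow> bool" where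
  "herm M \<longleftrightarrow> (\<forall>i<dim_row M. \<forall>j<dim_row M. M $$ (j, i) = cnj (M $$ (i, j)))"

lemma all2: "(\<forall>i<Suc (Suc 0). P i) \<longleftrightarrow> P 0 \<and> P (Suc 0)"
  by (auto simp: less_Suc_eq)

lemma pauli_carrier: "pauli_mat p \<in> carrier_mat 2 2"
  by (cases p) (auto simp: pauli_mat_def mat_of_rows_list_def)

lemma pauli_herm: "herm (pauli_mat p)"
  by (cases p) (simp_all add: herm_def pauli_mat_def mat_of_rows_list_def all2)

lemma eq2: "A \<in> carrier_mat 2 2 \<Longrightarrow> B \<in> carrier_mat 2 2 \<Longrightarrow> (\<forall>i<2. \<forall>j<2. A $$ (i,j) = B $$ (i,j)) \<Longrightarrow> A = B"
  by (rule eq_matI) auto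

lemma pauli_sq: "pauli_mat p * pauli_mat p = 1\<^sub>m 2"
  apply (rule eq2)
  using pauli_carrier[of p] apply auto[2]
  using pauli_carrier[of p]
  by (cases p) (simp_all add: all2 pauli_mat_def mat_of_rows_list_def scalar_prod_def numeral_2_eq_2)

lemma sum_add_split: "(\<Sum>k<m+(q::nat). f k) = (\<Sum>k<m. f k) + (\<Sum>b<q. f (m+b))"
  by (induct q) (auto simp: add_ac)

lemma sum_mult_split: "(\<Sum>k<p*(q::nat). f k) = (\<Sum>a<p. \<Sum>b<q. f (a*q+b))"
proof (induct p)
  case (Suc p)
  have "(\<Sum>k<Suc p*q. f k) = (\<Sum>k<p*q+q. f k)" by (simp add: add.commute)
  also have "\<dots> = (\<Sum>k<p*q. f k) + (\<Sum>b<q. f (p*q+b))" by (rule sum_add_split)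
  finally show ?case using Suc by simp
qed simp

lemma kron_carrier: "A \<in> carrier_mat p p' \<Longrightarrow> B \<in> carrier_mat q q' \<Longrightarrow> kron A B \<in> carrier_mat (p*q) (p'*q')"
  by (auto simp: kron_def)

lemma kron_index: "A \<in> carrier_mat p p' \<Longrightarrow> B \<in> carrier_mat q q' \<Longrightarrow> i < p*q \<Longrightarrow> j < p'*q' \<Longrightarrow>
  kron A B $$ (i,j) = A $$ (i div q, j div q') * B $$ (i mod q, j mod q')"
  by (auto simp: kron_def)

lemma div_lt: "i < p*q \<Longrightarrow> i div q < (p::nat)"
  by (simp add: less_mult_imp_div_less)
lemma mod_lt: "i < p*q \<Longrightarrow> i mod q < (q::nat)"
  by (metis mod_less_divisor mult_0_right not_less_zero zero_less_iff_neq_zero)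

lemma kron_mult:
  assumes A: "A \<in> carrier_mat p p'" and B: "B \<in> carrier_mat q q'"
    and C: "C \<in> carrier_mat p' p''" and D: "D \<in> carrier_mat q' q''" and q': "q' > 0"
  shows "kron A B * kron C D = kron (A*C) (B*D)"
proof (rule eq_matI)
  fix i j assume i: "i < dim_row (kron (A*C) (B*D))" and j: "j < dim_col (kron (A*C) (B*D))"
  hence i': "i < p*q" and j': "j < p''*q''" using A B C D by (auto simp: kron_def)
  have "(kron A B * kron C D) $$ (i,j) = (\<Sum>k<p'*q'. kron A B $$ (i,k) * kron C D $$ (k,j))"
    using i' j' kron_carrier[OF A B] kron_carrier[OF C D]
    by (simp add: index_mult_mat scalar_prod_def row_def col_def lessThan_atLeast0)
  also have "\<dots> = (\<Sum>a<p'. \<Sum>b<q'. kron A B $$ (i,a*q'+b) * kron C D $$ (a*q'+b,j))"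
    by (rule sum_mult_split)
  also have "\<dots> = (\<Sum>a<p'. \<Sum>b<q'. (A $$ (i div q, a) * C $$ (a, j div q'')) * (B $$ (i mod q, b) * D $$ (b, j mod q'')))"
  proof (intro sum.cong refl)
    fix a b assume a: "a \<in> {..<p'}" and b: "b \<in> {..<q'}"
    have ab1: "a*q'+b < Suc a*q'" using b by simp
    have ab2: "Suc a * q' \<le> p' * q'" using a by (intro mult_le_mono1) simp
    have ab: "a*q'+b < p'*q'" using ab1 ab2 by linarith
    show "kron A B $$ (i,a*q'+b) * kron C D $$ (a*q'+b,j) = (A $$ (i div q, a) * C $$ (a, j div q'')) * (B $$ (i mod q, b) * D $$ (b, j mod q''))"
      using b q' by (simp add: kron_index[OF A B i' ab] kron_index[OF C D ab j'])
  qed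
  also have "\<dots> = (\<Sum>a<p'. A $$ (i div q, a) * C $$ (a, j div q'')) * (\<Sum>b<q'. B $$ (i mod q, b) * D $$ (b, j mod q''))"
    by (simp only: sum_product)
  also have "\<dots> = (A*C) $$ (i div q, j div q'') * (B*D) $$ (i mod q, j mod q'')"
    using A B C D div_lt[OF i'] div_lt[OF j'] mod_lt[OF i'] mod_lt[OF j']
    by (simp add: index_mult_mat scalar_prod_def row_def col_def lessThan_atLeast0)
  also have "\<dots> = kron (A*C) (B*D) $$ (i,j)"
    using A B C D i' j' by (simp add: kron_def)
  finally show "(kron A B * kron C D) $$ (i,j) = kron (A*C) (B*D) $$ (i,j)" .
qed (use A B C D in \<open>auto simp: kron_def\<close>)

lemma kron_one: assumes q: "q > 0" shows "kron (1\<^sub>m p) (1\<^sub>m q) = 1\<^sub>m (p*q)"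
proof (rule eq_matI)
  fix i j assume i: "i < dim_row (1\<^sub>m (p*q))" and j: "j < dim_col (1\<^sub>m (p*q))"
  hence i': "i < p*q" and j': "j < p*q" by auto
  have e: "(i div q = j div q \<and> i mod q = j mod q) \<longleftrightarrow> i = j"
    by (metis div_mult_mod_eq)
  have "kron (1\<^sub>m p) (1\<^sub>m q) $$ (i,j) = 1\<^sub>m p $$ (i div q, j div q) * 1\<^sub>m q $$ (i mod q, j mod q)"
    by (rule kron_index[OF one_carrier_mat one_carrier_mat i' j'])
  also have "\<dots> = (if i = j then 1 else 0)"
    using div_lt[OF i'] div_lt[OF j'] mod_lt[OF i'] mod_lt[OF j'] e by auto
  finally show "kron (1\<^sub>m p) (1\<^sub>m q) $$ (i,j) = 1\<^sub>m (p*q) $$ (i,j)" using i' j' by simp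
qed (auto simp: kron_def)

lemma kron_herm: assumes A: "A \<in> carrier_mat p p" and B: "B \<in> carrier_mat q q" and hA: "herm A" and hB: "herm B"
  shows "herm (kron A B)"
  unfolding herm_def
proof (intro allI impI)
  fix i j assume i: "i < dim_row (kron A B)" and j: "j < dim_row (kron A B)"
  hence i': "i < p*q" and j': "j < p*q" using A B by (auto simp: kron_def)
  have "kron A B $$ (j, i) = A $$ (j div q, i div q) * B $$ (j mod q, i mod q)"
    by (rule kron_index[OF A B j' i'])
  also have "\<dots> = cnj (A $$ (i div q, j div q)) * cnj (B $$ (i mod q, j mod q))"
  proof -
    have "A $$ (j div q, i div q) = cnj (A $$ (i div q, j div q))"
      using hA A div_lt[OF i'] div_lt[OF j'] unfolding herm_def by blast
    moreover have "B $$ (j mod q, i mod q) = cnj (B $$ (i mod q, j mod q))"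
      using hB B mod_lt[OF i'] mod_lt[OF j'] unfolding herm_def by blast
    ultimately show ?thesis by simp
  qed
  also have "\<dots> = cnj (kron A B $$ (i, j))"
    by (simp add: kron_index[OF A B i' j'])
  finally show "kron A B $$ (j, i) = cnj (kron A B $$ (i, j))" .
qed

lemma ps_props: "pauli_string_mat ps \<in> carrier_mat (2^length ps) (2^length ps) \<and> herm (pauli_string_mat ps)
   \<and> pauli_string_mat ps * pauli_string_mat ps = 1\<^sub>m (2^length ps)"
proof (induct ps)
  case Nil
  show ?case by (auto simp: pauli_string_mat_def herm_def)
next
  case (Cons p ps)
  have e: "pauli_string_mat (p#ps) = kron (pauli_mat p) (pauli_string_mat ps)"
    by (simp add: pauli_string_mat_def)
  have c: "pauli_string_mat ps \<in> carrier_mat (2^length ps) (2^length ps)" using Cons by simp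
  show ?case unfolding e
    using kron_carrier[OF pauli_carrier c] kron_herm[OF pauli_carrier c pauli_herm] Cons
      kron_mult[OF pauli_carrier c pauli_carrier c] pauli_sq kron_one[of "2^length ps" 2]
    by auto
qed

definition tf :: "complex mat \<Rightarrow> complex mat \<Rightarrow> complex" where
  "tf \<rho> M = mtrace (\<rho> * M)"

lemma tf_form: "\<rho> \<in> carrier_mat d d \<Longrightarrow> M \<in> carrier_mat d d \<Longrightarrow>
  tf \<rho> M = (\<Sum>i<d. \<Sum>k<d. \<rho> $$ (i,k) * M $$ (k,i))"
  by (simp add: tf_def mtrace_def index_mult_mat scalar_prod_def row_def col_def lessThan_atLeast0)

lemma tf_minus: "\<rho> \<in> carrier_mat d d \<Longrightarrow> M \<in> carrier_mat d d \<Longrightarrow> N \<in> carrier_mat d d \<Longrightarrow>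
  tf \<rho> (M - N) = tf \<rho> M - tf \<rho> N"
proof -
  assume a: "\<rho> \<in> carrier_mat d d" "M \<in> carrier_mat d d" "N \<in> carrier_mat d d"
  have c: "M - N \<in> carrier_mat d d" using a by (metis minus_carrier_mat)
  show ?thesis using a by (simp add: tf_form[OF a(1) c] tf_form[OF a(1) a(2)] tf_form[OF a(1) a(3)] right_diff_distrib sum_subtractf)
qed

lemma tf_add: "\<rho> \<in> carrier_mat d d \<Longrightarrow> M \<in> carrier_mat d d \<Longrightarrow> N \<in> carrier_mat d d \<Longrightarrow>
  tf \<rho> (M + N) = tf \<rho> M + tf \<rho> N"
proof -
  assume a: "\<rho> \<in> carrier_mat d d" "M \<in> carrier_mat d d" "N \<in> carrier_mat d d"
  have c: "M + N \<in> carrier_mat d d" using a by simp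
  show ?thesis using a by (simp add: tf_form[OF a(1) c] tf_form[OF a(1) a(2)] tf_form[OF a(1) a(3)] distrib_left sum.distrib)
qed

lemma tf_smult: "\<rho> \<in> carrier_mat d d \<Longrightarrow> M \<in> carrier_mat d d \<Longrightarrow>
  tf \<rho> (a \<cdot>\<^sub>m M) = a * tf \<rho> M"
proof -
  assume a: "\<rho> \<in> carrier_mat d d" "M \<in> carrier_mat d d"
  have c: "a \<cdot>\<^sub>m M \<in> carrier_mat d d" using a by simp
  show ?thesis using a by (simp add: tf_form[OF a(1) c] tf_form[OF a(1) a(2)] sum_distrib_left mult_ac)
qed

lemma tf_one: "density_matrix d \<rho> \<Longrightarrow> tf \<rho> (1\<^sub>m d) = 1"
  unfolding density_matrix_def tf_def using right_mult_one_mat by metis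

lemma hermD: assumes "herm A" "A \<in> carrier_mat d d" "i<d" "j<d" shows "A $$ (j,i) = cnj (A $$ (i,j))"
proof -
  have "dim_row A = d" using assms(2) by auto
  thus ?thesis using assms(1,3,4) unfolding herm_def by blast
qed

lemma densD: assumes "density_matrix d \<rho>"
  shows "\<rho> \<in> carrier_mat d d" "\<And>i j. i<d \<Longrightarrow> j<d \<Longrightarrow> \<rho> $$ (j,i) = cnj (\<rho> $$ (i,j))"
    "\<And>v. v \<in> carrier_vec d \<Longrightarrow> Re (\<Sum>i<d. cnj (v $ i) * (\<rho> *\<^sub>v v) $ i) \<ge> 0"
    "mtrace \<rho> = 1"
  using assms unfolding density_matrix_def by blast+

lemma tf_real: assumes r: "density_matrix d \<rho>" and A: "A \<in> carrier_mat d d" and h: "herm A"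
  shows "cnj (tf \<rho> A) = tf \<rho> A"
proof -
  note rc = densD(1)[OF r] and rh = densD(2)[OF r]
  note ah = hermD[OF h A]
  have "cnj (tf \<rho> A) = (\<Sum>i<d. \<Sum>k<d. cnj (\<rho> $$ (i,k)) * cnj (A $$ (k,i)))"
    by (simp add: tf_form[OF rc A])
  also have "\<dots> = (\<Sum>i<d. \<Sum>k<d. \<rho> $$ (k,i) * A $$ (i,k))"
  proof (intro sum.cong refl)
    fix i k assume i: "i \<in> {..<d}" and k: "k \<in> {..<d}"
    have 1: "cnj (\<rho> $$ (i,k)) = \<rho> $$ (k,i)" using rh[of i k] i k by simp
    have 2: "cnj (A $$ (k,i)) = A $$ (i,k)" using ah[of k i] i k by simp
    show "cnj (\<rho> $$ (i,k)) * cnj (A $$ (k,i)) = \<rho> $$ (k,i) * A $$ (i,k)" by (simp only: 1 2)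
  qed
  also have "\<dots> = (\<Sum>k<d. \<Sum>i<d. \<rho> $$ (k,i) * A $$ (i,k))"
    by (rule sum.swap)
  also have "\<dots> = tf \<rho> A" by (simp add: tf_form[OF rc A])
  finally show ?thesis .
qed

lemma tf_psd: assumes r: "density_matrix d \<rho>" and X: "X \<in> carrier_mat d d" and h: "herm X"
  shows "Re (tf \<rho> (X * X)) \<ge> 0"
proof -
  note rc = densD(1)[OF r] and q = densD(3)[OF r]
  note xh = hermD[OF h X]
  have XX: "X * X \<in> carrier_mat d d" using X by simp
  have "tf \<rho> (X * X) = (\<Sum>i<d. \<Sum>k<d. \<rho> $$ (i,k) * (\<Sum>l<d. X $$ (k,l) * X $$ (l,i)))"
    using X by (simp add: tf_form[OF rc XX] index_mult_mat scalar_prod_def row_def col_def lessThan_atLeast0)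
  also have "\<dots> = (\<Sum>i<d. \<Sum>k<d. \<Sum>l<d. X $$ (l,i) * \<rho> $$ (i,k) * X $$ (k,l))"
    by (simp add: sum_distrib_left mult_ac)
  also have "\<dots> = (\<Sum>i<d. \<Sum>l<d. \<Sum>k<d. X $$ (l,i) * \<rho> $$ (i,k) * X $$ (k,l))"
    by (intro sum.cong refl sum.swap)
  also have "\<dots> = (\<Sum>l<d. \<Sum>i<d. \<Sum>k<d. X $$ (l,i) * \<rho> $$ (i,k) * X $$ (k,l))"
    by (rule sum.swap)
  also have "\<dots> = (\<Sum>l<d. (\<Sum>i<d. cnj (col X l $ i) * (\<rho> *\<^sub>v col X l) $ i))"
  proof (intro sum.cong refl)
    fix l i assume l: "l \<in> {..<d}" and i: "i \<in> {..<d}"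
    show "(\<Sum>k<d. X $$ (l,i) * \<rho> $$ (i,k) * X $$ (k,l)) = cnj (col X l $ i) * (\<rho> *\<^sub>v col X l) $ i"
      using l i X rc xh[of i l]
      by (simp add: index_mult_mat_vec scalar_prod_def row_def col_def lessThan_atLeast0 sum_distrib_left mult_ac)
  qed
  finally have "Re (tf \<rho> (X * X)) = (\<Sum>l<d. Re (\<Sum>i<d. cnj (col X l $ i) * (\<rho> *\<^sub>v col X l) $ i))"
    by simp
  also have "\<dots> \<ge> 0"
    by (intro sum_nonneg q) (use X in auto)
  finally show ?thesis .
qed

lemma key:
  assumes r: "density_matrix d \<rho>" and C: "C \<in> carrier_mat d d" and h: "herm C"
    and sq: "C * C = complex_of_real s \<cdot>\<^sub>m 1\<^sub>m d"
  shows "(Re (tf \<rho> C))^2 \<le> s"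
proof -
  note rc = densD(1)[OF r]
  define c where "c = tf \<rho> C"
  have cr: "cnj c = c" unfolding c_def by (rule tf_real[OF r C h])
  define X where "X = C - c \<cdot>\<^sub>m 1\<^sub>m d"
  have oc: "c \<cdot>\<^sub>m 1\<^sub>m d \<in> carrier_mat d d" by simp
  have X: "X \<in> carrier_mat d d" unfolding X_def using C oc by (metis minus_carrier_mat)
  have hX: "herm X" unfolding herm_def
  proof (intro allI impI)
    fix i j assume i: "i < dim_row X" and j: "j < dim_row X"
    hence i': "i < d" and j': "j < d" using X by auto
    have "X $$ (j,i) = C $$ (j,i) - (if j = i then c else 0)"
      unfolding X_def using C i' j' by simp
    also have "\<dots> = cnj (C $$ (i,j)) - (if j = i then cnj c else 0)"
      using hermD[OF h C i' j'] cr by simp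
    also have "\<dots> = cnj (X $$ (i,j))"
      unfolding X_def using C i' j' by simp
    finally show "X $$ (j,i) = cnj (X $$ (i,j))" .
  qed
  have CX: "C * X = C * C - c \<cdot>\<^sub>m C"
    unfolding X_def using C oc
    by (simp add: mult_minus_distrib_mat[OF C C oc] mult_smult_distrib[OF C one_carrier_mat])
  have XX0: "X * X = C * X - (c \<cdot>\<^sub>m 1\<^sub>m d) * X"
    using minus_mult_distrib_mat[OF C oc X] by (simp only: X_def[symmetric])
  have XX: "X * X = C * X - c \<cdot>\<^sub>m X"
    unfolding XX0 using X by (simp add: mult_smult_assoc_mat[OF one_carrier_mat X])
  have CC: "C * C \<in> carrier_mat d d" using C by simp
  have cC: "c \<cdot>\<^sub>m C \<in> carrier_mat d d" using C by simp
  have cX: "c \<cdot>\<^sub>m X \<in> carrier_mat d d" using X by simp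
  have CXc: "C * X \<in> carrier_mat d d" using C X by simp
  have t1: "tf \<rho> (C * C) = complex_of_real s"
    unfolding sq using tf_smult[OF rc one_carrier_mat] tf_one[OF r] by simp
  have tX: "tf \<rho> X = c - c"
    unfolding X_def using tf_minus[OF rc C oc] tf_smult[OF rc one_carrier_mat] tf_one[OF r] c_def by simp
  have "tf \<rho> (X * X) = tf \<rho> (C * X) - c * tf \<rho> X"
    unfolding XX using tf_minus[OF rc CXc cX] tf_smult[OF rc X] by simp
  also have "\<dots> = complex_of_real s - c * c"
    unfolding CX tX using tf_minus[OF rc CC cC] tf_smult[OF rc C] t1 c_def by simp
  finally have e: "tf \<rho> (X * X) = complex_of_real s - c * c" .
  have "0 \<le> Re (tf \<rho> (X * X))" by (rule tf_psd[OF r X hX])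
  also have "\<dots> = s - (Re c)^2"
  proof -
    have im: "Im c = 0" using cr by (simp add: complex_eq_iff)
    show ?thesis unfolding e using im by (simp add: power2_eq_square)
  qed
  finally show ?thesis unfolding c_def by simp
qed

lemma tf_cmod: assumes r: "density_matrix d \<rho>" and A: "A \<in> carrier_mat d d" and h: "herm A"
  shows "tf \<rho> A = complex_of_real (Re (tf \<rho> A))" "cmod (tf \<rho> A) = \<bar>Re (tf \<rho> A)\<bar>"
proof -
  have "Im (tf \<rho> A) = 0" using tf_real[OF r A h] by (simp add: complex_eq_iff)
  thus "tf \<rho> A = complex_of_real (Re (tf \<rho> A))" "cmod (tf \<rho> A) = \<bar>Re (tf \<rho> A)\<bar>"
    by (simp_all add: complex_eq_iff cmod_eq_Re)
qed

lemma single_bound: assumes r: "density_matrix d \<rho>" and A: "A \<in> carrier_mat d d" and h: "herm A"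
  and sq: "A * A = 1\<^sub>m d"
  shows "cmod (tf \<rho> A) \<le> 1"
proof -
  have "A * A = complex_of_real 1 \<cdot>\<^sub>m 1\<^sub>m d" unfolding sq by (rule eq_matI) auto
  from key[OF r A h this] have "(Re (tf \<rho> A))^2 \<le> 1" .
  hence "\<bar>Re (tf \<rho> A)\<bar> \<le> 1" by (simp add: abs_square_le_1)
  thus ?thesis using tf_cmod[OF r A h] by simp
qed

lemma pair_bound: assumes r: "density_matrix d \<rho>" and A: "A \<in> carrier_mat d d" and hA: "herm A"
  and sA: "A * A = 1\<^sub>m d" and B: "B \<in> carrier_mat d d" and hB: "herm B"
  and sB: "B * B = 1\<^sub>m d" and ac: "A * B = - (B * A)"
  shows "(cmod (tf \<rho> A))^2 + (cmod (tf \<rho> B))^2 \<le> 1"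
proof -
  note rc = densD(1)[OF r]
  define ar where "ar = Re (tf \<rho> A)"
  define br where "br = Re (tf \<rho> B)"
  define a where "a = complex_of_real ar"
  define b where "b = complex_of_real br"
  have ta: "tf \<rho> A = a" unfolding a_def ar_def using tf_cmod(1)[OF r A hA] by simp
  have tb: "tf \<rho> B = b" unfolding b_def br_def using tf_cmod(1)[OF r B hB] by simp
  define C where "C = a \<cdot>\<^sub>m A + b \<cdot>\<^sub>m B"
  have aA: "a \<cdot>\<^sub>m A \<in> carrier_mat d d" and bB: "b \<cdot>\<^sub>m B \<in> carrier_mat d d" using A B by auto
  have C: "C \<in> carrier_mat d d" unfolding C_def using aA bB by simp
  have hC: "herm C" unfolding herm_def
  proof (intro allI impI)
    fix i j assume i: "i < dim_row C" and j: "j < dim_row C"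
    hence i': "i < d" and j': "j < d" using C by auto
    have "C $$ (j,i) = a * A $$ (j,i) + b * B $$ (j,i)" unfolding C_def using A B i' j' by simp
    also have "\<dots> = a * cnj (A $$ (i,j)) + b * cnj (B $$ (i,j))"
      using hermD[OF hA A i' j'] hermD[OF hB B i' j'] by simp
    also have "\<dots> = cnj (C $$ (i,j))" unfolding C_def using A B i' j' by (simp add: a_def b_def)
    finally show "C $$ (j,i) = cnj (C $$ (i,j))" .
  qed
  define s where "s = ar^2 + br^2"
  have sq: "C * C = complex_of_real s \<cdot>\<^sub>m 1\<^sub>m d"
  proof (rule eq_matI)
    fix i j assume i: "i < dim_row (complex_of_real s \<cdot>\<^sub>m 1\<^sub>m d)" and j: "j < dim_col (complex_of_real s \<cdot>\<^sub>m 1\<^sub>m d)"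
    hence i': "i < d" and j': "j < d" by auto
    have mi: "\<And>M N. M \<in> carrier_mat d d \<Longrightarrow> N \<in> carrier_mat d d \<Longrightarrow> (M * N) $$ (i,j) = (\<Sum>k<d. M $$ (i,k) * N $$ (k,j))"
      using i' j' by (simp add: index_mult_mat scalar_prod_def row_def col_def lessThan_atLeast0)
    have e1: "(\<Sum>k<d. A $$ (i,k) * A $$ (k,j)) = (if i = j then 1 else 0)"
      using mi[OF A A] sA i' j' by simp
    have e2: "(\<Sum>k<d. B $$ (i,k) * B $$ (k,j)) = (if i = j then 1 else 0)"
      using mi[OF B B] sB i' j' by simp
    have e3: "(\<Sum>k<d. A $$ (i,k) * B $$ (k,j)) = - (\<Sum>k<d. B $$ (i,k) * A $$ (k,j))"
      using mi[OF A B] mi[OF B A] ac i' j' A B by simp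
    have "(C * C) $$ (i,j) = (\<Sum>k<d. (a * A $$ (i,k) + b * B $$ (i,k)) * (a * A $$ (k,j) + b * B $$ (k,j)))"
      using mi[OF C C] i' j' A B by (simp add: C_def)
    also have "\<dots> = a*a*(\<Sum>k<d. A $$ (i,k) * A $$ (k,j)) + a*b*(\<Sum>k<d. A $$ (i,k) * B $$ (k,j))
       + a*b*(\<Sum>k<d. B $$ (i,k) * A $$ (k,j)) + b*b*(\<Sum>k<d. B $$ (i,k) * B $$ (k,j))"
      by (simp add: algebra_simps sum.distrib sum_distrib_left)
    also have "\<dots> = (complex_of_real s \<cdot>\<^sub>m 1\<^sub>m d) $$ (i,j)"
      unfolding e1 e2 e3 using i' j' by (simp add: s_def a_def b_def power2_eq_square)
    finally show "(C * C) $$ (i,j) = (complex_of_real s \<cdot>\<^sub>m 1\<^sub>m d) $$ (i,j)" .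
  qed (use C in auto)
  have tC: "tf \<rho> C = complex_of_real s"
    unfolding C_def using tf_add[OF rc aA bB] tf_smult[OF rc A] tf_smult[OF rc B] ta tb
    by (simp add: s_def a_def b_def power2_eq_square)
  from key[OF r C hC sq] have "s^2 \<le> s" unfolding tC by simp
  hence "s \<le> 1"
  proof -
    assume ss: "s^2 \<le> s"
    show "s \<le> 1"
    proof (rule ccontr)
      assume "\<not> s \<le> 1"
      hence "s * 1 < s * s" by (intro mult_strict_left_mono) auto
      thus False using ss by (simp add: power2_eq_square)
    qed
  qed
  thus ?thesis using tf_cmod(2)[OF r A hA] tf_cmod(2)[OF r B hB] unfolding s_def ar_def br_def by simp
qed

lemma step_comm:
  fixes P Q M :: "complex mat"
  assumes P: "P \<in> carrier_mat d d" and Q: "Q \<in> carrier_mat d d" and M: "M \<in> carrier_mat d d"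
    and pq: "P * Q = Q * P" and pm: "P * M = c \<cdot>\<^sub>m M"
  shows "P * (M + Q * M) = c \<cdot>\<^sub>m (M + Q * M)" "P * (M - Q * M) = c \<cdot>\<^sub>m (M - Q * M)"
proof -
  have QM: "Q * M \<in> carrier_mat d d" using Q M by simp
  have PQM: "P * (Q * M) = c \<cdot>\<^sub>m (Q * M)"
  proof -
    have "P * (Q * M) = (P * Q) * M" using P Q M by simp
    also have "\<dots> = Q * (P * M)" unfolding pq using P Q M by simp
    also have "\<dots> = c \<cdot>\<^sub>m (Q * M)" unfolding pm by (rule mult_smult_distrib[OF Q M])
    finally show ?thesis .
  qed
  have "P * (M + Q * M) = P * M + P * (Q * M)" by (rule mult_add_distrib_mat[OF P M QM])
  also have "\<dots> = c \<cdot>\<^sub>m M + c \<cdot>\<^sub>m (Q * M)" by (simp only: pm PQM)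
  also have "\<dots> = c \<cdot>\<^sub>m (M + Q * M)" by (rule add_smult_distrib_left_mat[OF M QM, symmetric])
  finally show "P * (M + Q * M) = c \<cdot>\<^sub>m (M + Q * M)" .
  have "P * (M - Q * M) = P * M - P * (Q * M)" by (rule mult_minus_distrib_mat[OF P M QM])
  also have "\<dots> = c \<cdot>\<^sub>m M - c \<cdot>\<^sub>m (Q * M)" by (simp only: pm PQM)
  also have "\<dots> = c \<cdot>\<^sub>m (M - Q * M)"
  proof (rule eq_matI)
    fix a b assume a: "a < dim_row (c \<cdot>\<^sub>m (M - Q * M))" and b: "b < dim_col (c \<cdot>\<^sub>m (M - Q * M))"
    hence a': "a < d" and b': "b < d" using QM by auto
    show "(c \<cdot>\<^sub>m M - c \<cdot>\<^sub>m (Q * M)) $$ (a,b) = (c \<cdot>\<^sub>m (M - Q * M)) $$ (a,b)"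
      using a' b' carrier_matD[OF M] carrier_matD[OF QM] by (simp add: right_diff_distrib)
  qed (use M QM in auto)
  finally show "P * (M - Q * M) = c \<cdot>\<^sub>m (M - Q * M)" .
qed

lemma step_self:
  fixes Q M :: "complex mat"
  assumes Q: "Q \<in> carrier_mat d d" and M: "M \<in> carrier_mat d d" and qq: "Q * Q = 1\<^sub>m d"
  shows "Q * (M + Q * M) = 1 \<cdot>\<^sub>m (M + Q * M)" "Q * (M - Q * M) = (-1) \<cdot>\<^sub>m (M - Q * M)"
proof -
  have QM: "Q * M \<in> carrier_mat d d" using Q M by simp
  have QQM: "Q * (Q * M) = M"
  proof -
    have "Q * (Q * M) = (Q * Q) * M" using Q M by simp
    thus ?thesis unfolding qq using M by (simp add: left_mult_one_mat)
  qed
  note dM = carrier_matD[OF M] and dQM = carrier_matD[OF QM]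
  have "Q * (M + Q * M) = Q * M + Q * (Q * M)" by (rule mult_add_distrib_mat[OF Q M QM])
  also have "\<dots> = 1 \<cdot>\<^sub>m (M + Q * M)" unfolding QQM
    by (rule eq_matI) (use dM dQM in auto)
  finally show "Q * (M + Q * M) = 1 \<cdot>\<^sub>m (M + Q * M)" .
  have "Q * (M - Q * M) = Q * M - Q * (Q * M)" by (rule mult_minus_distrib_mat[OF Q M QM])
  also have "\<dots> = (-1) \<cdot>\<^sub>m (M - Q * M)" unfolding QQM
    by (rule eq_matI) (use dM dQM in auto)
  finally show "Q * (M - Q * M) = (-1) \<cdot>\<^sub>m (M - Q * M)" .
qed

lemma common_eig:
  assumes d: "d > 0"
  shows "finite I \<Longrightarrow> (\<forall>i\<in>I. P i \<in> carrier_mat d d \<and> P i * P i = 1\<^sub>m d) \<longrightarrow>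
    (\<forall>i\<in>I. \<forall>j\<in>I. P i * P j = P j * P i) \<longrightarrow>
    (\<exists>M s. M \<in> carrier_mat d d \<and> M \<noteq> 0\<^sub>m d d \<and> (\<forall>i\<in>I. (s i = 1 \<or> s i = (-1::complex)) \<and> P i * M = s i \<cdot>\<^sub>m M))"
proof (induct I rule: finite_induct)
  case empty
  have "1\<^sub>m d \<noteq> (0\<^sub>m d d :: complex mat)"
  proof
    assume "1\<^sub>m d = (0\<^sub>m d d :: complex mat)"
    hence "(1\<^sub>m d :: complex mat) $$ (0,0) = 0\<^sub>m d d $$ (0,0)" by simp
    thus False using d by simp
  qed
  thus ?case by (intro impI exI[of _ "1\<^sub>m d"]) auto
next
  case (insert j F)
  show ?case
  proof (intro impI)
    assume h1: "\<forall>i\<in>insert j F. P i \<in> carrier_mat d d \<and> P i * P i = 1\<^sub>m d"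
      and h2: "\<forall>i\<in>insert j F. \<forall>k\<in>insert j F. P i * P k = P k * P i"
    have g1: "\<forall>i\<in>F. P i \<in> carrier_mat d d \<and> P i * P i = 1\<^sub>m d" using h1 by blast
    have g2: "\<forall>i\<in>F. \<forall>k\<in>F. P i * P k = P k * P i" using h2 by blast
    have ex: "\<exists>M s. M \<in> carrier_mat d d \<and> M \<noteq> 0\<^sub>m d d \<and> (\<forall>i\<in>F. (s i = 1 \<or> s i = (-1::complex)) \<and> P i * M = s i \<cdot>\<^sub>m M)"
      using mp[OF mp[OF insert(3) g1] g2] .
    then obtain M s where M: "M \<in> carrier_mat d d" and M0: "M \<noteq> 0\<^sub>m d d"
      and Ms: "\<forall>i\<in>F. (s i = 1 \<or> s i = (-1::complex)) \<and> P i * M = s i \<cdot>\<^sub>m M" by blast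
    have Pj: "P j \<in> carrier_mat d d" and Pjj: "P j * P j = 1\<^sub>m d" using h1 by auto
    define M1 where "M1 = M + P j * M"
    define M2 where "M2 = M - P j * M"
    have PjM: "P j * M \<in> carrier_mat d d" using Pj M by simp
    have M1c: "M1 \<in> carrier_mat d d" unfolding M1_def using M PjM by simp
    have M2c: "M2 \<in> carrier_mat d d" unfolding M2_def using M PjM by (metis minus_carrier_mat)
    have F12: "P i * M1 = s i \<cdot>\<^sub>m M1 \<and> P i * M2 = s i \<cdot>\<^sub>m M2" if iF: "i \<in> F" for i
    proof -
      have Pi: "P i \<in> carrier_mat d d" using h1 iF by blast
      have c: "P i * P j = P j * P i" using h2 iF by blast
      have m: "P i * M = s i \<cdot>\<^sub>m M" using Ms iF by blast
      show ?thesis unfolding M1_def M2_def using step_comm[OF Pi Pj M c m] by blast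
    qed
    have "M1 \<noteq> 0\<^sub>m d d \<or> M2 \<noteq> 0\<^sub>m d d"
    proof (rule ccontr)
      assume "\<not> ?thesis"
      hence z: "M1 = 0\<^sub>m d d" "M2 = 0\<^sub>m d d" by auto
      have "M = 0\<^sub>m d d"
      proof (rule eq_matI)
        fix a b assume a: "a < dim_row (0\<^sub>m d d :: complex mat)" and b: "b < dim_col (0\<^sub>m d d :: complex mat)"
        hence a': "a < d" and b': "b < d" by auto
        note dM = carrier_matD[OF M] and dP = carrier_matD[OF PjM]
        have "M1 $$ (a,b) = M $$ (a,b) + (P j * M) $$ (a,b)"
          unfolding M1_def using a' b' dM dP by (simp del: index_mult_mat)
        moreover have "M2 $$ (a,b) = M $$ (a,b) - (P j * M) $$ (a,b)"
          unfolding M2_def using a' b' dM dP by (simp del: index_mult_mat)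
        moreover have "M1 $$ (a,b) = 0" "M2 $$ (a,b) = 0" using z a' b' by simp_all
        ultimately have "(M $$ (a,b) + (P j * M) $$ (a,b)) + (M $$ (a,b) - (P j * M) $$ (a,b)) = 0" by simp
        hence "2 * M $$ (a,b) = 0" by (simp add: algebra_simps)
        hence "M $$ (a,b) = 0" by simp
        thus "M $$ (a,b) = 0\<^sub>m d d $$ (a,b)" using a' b' by simp
      qed (use M in auto)
      thus False using M0 by simp
    qed
    thus "\<exists>M s. M \<in> carrier_mat d d \<and> M \<noteq> 0\<^sub>m d d \<and> (\<forall>i\<in>insert j F. (s i = 1 \<or> s i = (-1::complex)) \<and> P i * M = s i \<cdot>\<^sub>m M)"
    proof
      assume nz: "M1 \<noteq> 0\<^sub>m d d"
      have pj: "P j * M1 = 1 \<cdot>\<^sub>m M1" unfolding M1_def by (rule step_self(1)[OF Pj M Pjj])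
      have all: "\<forall>i\<in>insert j F. ((s(j := 1)) i = 1 \<or> (s(j := 1)) i = -1) \<and> P i * M1 = (s(j := 1)) i \<cdot>\<^sub>m M1"
      proof
        fix i assume i: "i \<in> insert j F"
        show "((s(j := 1)) i = 1 \<or> (s(j := 1)) i = -1) \<and> P i * M1 = (s(j := 1)) i \<cdot>\<^sub>m M1"
        proof (cases "i = j")
          case True thus ?thesis using pj by simp
        next
          case False
          hence iF: "i \<in> F" using i by simp
          have "s i = 1 \<or> s i = -1" using Ms iF by blast
          thus ?thesis using F12[OF iF] False by simp
        qed
      qed
      show ?thesis using M1c nz all by blast
    next
      assume nz: "M2 \<noteq> 0\<^sub>m d d"
      have pj: "P j * M2 = (-1) \<cdot>\<^sub>m M2" unfolding M2_def by (rule step_self(2)[OF Pj M Pjj])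
      have all: "\<forall>i\<in>insert j F. ((s(j := -1)) i = 1 \<or> (s(j := -1)) i = -1) \<and> P i * M2 = (s(j := -1)) i \<cdot>\<^sub>m M2"
      proof
        fix i assume i: "i \<in> insert j F"
        show "((s(j := -1)) i = 1 \<or> (s(j := -1)) i = -1) \<and> P i * M2 = (s(j := -1)) i \<cdot>\<^sub>m M2"
        proof (cases "i = j")
          case True thus ?thesis using pj by simp
        next
          case False
          hence iF: "i \<in> F" using i by simp
          have "s i = 1 \<or> s i = -1" using Ms iF by blast
          thus ?thesis using F12[OF iF] False by simp
        qed
      qed
      show ?thesis using M2c nz all by blast
    qed
  qed
qed

lemma eig_density:
  assumes M: "M \<in> carrier_mat d d" and M0: "M \<noteq> 0\<^sub>m d d"
    and eig: "\<forall>i\<in>I. P i \<in> carrier_mat d d \<and> P i * M = s i \<cdot>\<^sub>m M"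
  shows "\<exists>\<rho>. density_matrix d \<rho> \<and> (\<forall>i\<in>I. tf \<rho> (P i) = s i)"
proof -
  obtain a b where a: "a < d" and b: "b < d" and nz: "M $$ (a,b) \<noteq> 0"
  proof -
    have "\<exists>a b. a < d \<and> b < d \<and> M $$ (a,b) \<noteq> 0"
    proof (rule ccontr)
      assume "\<not> ?thesis"
      hence "M = 0\<^sub>m d d" by (intro eq_matI) (use M in auto)
      thus False using M0 by simp
    qed
    thus ?thesis using that by blast
  qed
  define m where "m k = M $$ (k,b)" for k
  define N where "N = (\<Sum>k<d. (cmod (m k))^2)"
  have Npos: "N > 0"
  proof -
    have "(cmod (m a))^2 > 0" using nz by (simp add: m_def)
    moreover have "(cmod (m a))^2 \<le> N" unfolding N_def
      by (rule member_le_sum) (use a in auto)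
    ultimately show ?thesis by linarith
  qed
  have Nsum: "(\<Sum>k<d. m k * cnj (m k)) = complex_of_real N"
    unfolding N_def by (simp only: of_real_sum complex_norm_square)
  define \<rho> where "\<rho> = mat d d (\<lambda>(x,y). m x * cnj (m y) / complex_of_real N)"
  have rc: "\<rho> \<in> carrier_mat d d" unfolding \<rho>_def by simp
  have ri: "\<And>x y. x < d \<Longrightarrow> y < d \<Longrightarrow> \<rho> $$ (x,y) = m x * cnj (m y) / complex_of_real N"
    unfolding \<rho>_def by simp
  have dens: "density_matrix d \<rho>"
    unfolding density_matrix_def
  proof (intro conjI allI impI ballI)
    show "\<rho> \<in> carrier_mat d d" by (rule rc)
  next
    fix i j assume "i < d" "j < d"
    thus "\<rho> $$ (j, i) = cnj (\<rho> $$ (i, j))" by (simp add: ri)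
  next
    fix u :: "complex vec" assume u: "u \<in> carrier_vec d"
    define z where "z = (\<Sum>y<d. cnj (m y) * u $ y)"
    have rv: "(\<rho> *\<^sub>v u) $ x = m x * z / complex_of_real N" if x: "x < d" for x
      using x rc u by (simp add: mult_mat_vec_def scalar_prod_def ri z_def sum_divide_distrib sum_distrib_left
        lessThan_atLeast0 mult_ac)
    have "(\<Sum>i<d. cnj (u $ i) * (\<rho> *\<^sub>v u) $ i) = (\<Sum>i<d. cnj (u $ i) * m i * z / complex_of_real N)"
      by (intro sum.cong refl) (simp add: rv)
    also have "\<dots> = (\<Sum>i<d. cnj (u $ i) * m i) * z / complex_of_real N"
      by (simp only: sum_distrib_right sum_divide_distrib)
    also have "(\<Sum>i<d. cnj (u $ i) * m i) = cnj z" unfolding z_def by (simp add: mult_ac)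
    finally have e0: "(\<Sum>i<d. cnj (u $ i) * (\<rho> *\<^sub>v u) $ i) = cnj z * z / complex_of_real N" .
    have zz: "z * cnj z = complex_of_real ((cmod z)^2)" by (rule complex_norm_square[symmetric])
    have e: "(\<Sum>i<d. cnj (u $ i) * (\<rho> *\<^sub>v u) $ i) = complex_of_real ((cmod z)^2 / N)"
      by (simp only: e0 mult.commute[of "cnj z"] zz of_real_divide)
    show "0 \<le> Re (\<Sum>i<d. cnj (u $ i) * (\<rho> *\<^sub>v u) $ i)"
      unfolding e using Npos by simp
  next
    have "mtrace \<rho> = (\<Sum>k<d. m k * cnj (m k)) / complex_of_real N"
      unfolding mtrace_def using rc by (simp add: ri sum_divide_distrib)
    thus "mtrace \<rho> = 1" unfolding Nsum using Npos by simp
  qed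
  have "tf \<rho> (P i) = s i" if i: "i \<in> I" for i
  proof -
    have Pi: "P i \<in> carrier_mat d d" and PM: "P i * M = s i \<cdot>\<^sub>m M" using eig i by auto
    have row: "(\<Sum>x<d. P i $$ (k,x) * m x) = s i * m k" if k: "k < d" for k
    proof -
      have "(P i * M) $$ (k,b) = (\<Sum>x<d. P i $$ (k,x) * m x)"
        using Pi M k b by (simp add: index_mult_mat scalar_prod_def m_def lessThan_atLeast0)
      moreover have "(P i * M) $$ (k,b) = s i * m k" unfolding PM using M k b by (simp add: m_def)
      ultimately show ?thesis by simp
    qed
    have "tf \<rho> (P i) = (\<Sum>x<d. \<Sum>k<d. m x * cnj (m k) / complex_of_real N * P i $$ (k,x))"
      by (simp add: tf_form[OF rc Pi] ri)
    also have "\<dots> = (\<Sum>k<d. \<Sum>x<d. m x * cnj (m k) / complex_of_real N * P i $$ (k,x))"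
      by (rule sum.swap)
    also have "\<dots> = (\<Sum>k<d. cnj (m k) / complex_of_real N * (\<Sum>x<d. P i $$ (k,x) * m x))"
      by (simp add: sum_distrib_left mult_ac)
    also have "\<dots> = (\<Sum>k<d. s i * (m k * cnj (m k)) / complex_of_real N)"
    proof (intro sum.cong refl)
      fix k assume k: "k \<in> {..<d}"
      show "cnj (m k) / complex_of_real N * (\<Sum>x<d. P i $$ (k,x) * m x) = s i * (m k * cnj (m k)) / complex_of_real N"
        unfolding row[of k, OF k[simplified]] by (simp add: mult_ac)
    qed
    also have "\<dots> = s i * (\<Sum>k<d. m k * cnj (m k)) / complex_of_real N"
      by (simp add: sum_divide_distrib sum_distrib_left)
    also have "\<dots> = s i" unfolding Nsum using Npos by simp
    finally show ?thesis .
  qed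
  thus ?thesis using dens by blast
qed

theorem proposition2:
  fixes n :: nat and E :: "nat \<Rightarrow> nat \<Rightarrow> bool"
    and S :: "nat \<Rightarrow> pauli list" and w :: "nat \<Rightarrow> real"
  assumes "is_graph n E"
    and "realization n E S"
    and "\<forall>i<n. w i \<ge> 0"
  shows "(\<lambda>k. beta n S w (Suc k)) \<longlonglongrightarrow> alpha n E w"
proof -
  note R = assms(2) and W = assms(3)
  define d where "d = (2::nat) ^ length (S 0)"
  have d0: "d > 0" unfolding d_def by simp
  define P where "P i = pauli_string_mat (S i)" for i
  obtain m0 where m0: "\<forall>i<n. length (S i) = m0" using R unfolding realization_def by blast
  have len: "length (S i) = length (S 0)" if "i < n" for i
    using m0 that by (metis gr_implies_not0 neq0_conv)
  have Pc: "P i \<in> carrier_mat d d" and Ph: "herm (P i)" and Psq: "P i * P i = 1\<^sub>m d" if "i < n" for i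
    using ps_props[of "S i"] len[OF that] unfolding P_def d_def by auto
  have Rc: "\<forall>i<n. \<forall>j<n.
        (E i j \<longrightarrow> pauli_string_mat (S i) * pauli_string_mat (S j)
                    = - (pauli_string_mat (S j) * pauli_string_mat (S i))) \<and>
        (\<not> E i j \<longrightarrow> pauli_string_mat (S i) * pauli_string_mat (S j)
                    = pauli_string_mat (S j) * pauli_string_mat (S i))"
    using R unfolding realization_def by (elim conjE)
  have comm: "P i * P j = P j * P i" if "i < n" "j < n" "\<not> E i j" for i j
  proof -
    have "(\<not> E i j \<longrightarrow> pauli_string_mat (S i) * pauli_string_mat (S j)
                    = pauli_string_mat (S j) * pauli_string_mat (S i))" using Rc that(1,2) by (meson spec mp conjunct2)
    thus ?thesis using that(3) unfolding P_def by (rule mp)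
  qed
  have anti: "P i * P j = - (P j * P i)" if "i < n" "j < n" "E i j" for i j
  proof -
    have "(E i j \<longrightarrow> pauli_string_mat (S i) * pauli_string_mat (S j)
                    = - (pauli_string_mat (S j) * pauli_string_mat (S i)))" using Rc that(1,2) by (meson spec mp conjunct1)
    thus ?thesis using that(3) unfolding P_def by (rule mp)
  qed
  define Ind where "Ind = {(\<Sum>i\<in>I. w i) | I. independent_set n E I}"
  have IndI: "Ind = (\<lambda>I. \<Sum>i\<in>I. w i) ` {I. independent_set n E I}" unfolding Ind_def by blast
  have finI: "finite {I. independent_set n E I}"
    by (rule finite_subset[of _ "Pow {0..<n}"]) (auto simp: independent_set_def)
  have finInd: "finite Ind" unfolding IndI using finI by (rule finite_imageI)
  have "independent_set n E {}" unfolding independent_set_def by simp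
  hence neInd: "Ind \<noteq> {}" unfolding IndI by blast
  have al: "alpha n E w = Max Ind" unfolding alpha_def Ind_def by simp
  have alpha_ge: "(\<Sum>i\<in>J. w i) \<le> alpha n E w" if "independent_set n E J" for J
    unfolding al by (rule Max_ge[OF finInd]) (use that in \<open>simp add: IndI\<close>)
  have "Max Ind \<in> Ind" by (rule Max_in[OF finInd neInd])
  then obtain I0 where I0: "independent_set n E I0" and aI0': "Max Ind = (\<Sum>i\<in>I0. w i)"
    unfolding IndI by blast
  have aI0: "alpha n E w = (\<Sum>i\<in>I0. w i)" using al aI0' by simp
  define Wt where "Wt = (\<Sum>i<n. w i)"
  define r where "r = sqrt (1/2::real)"
  have r0: "0 \<le> r" and r1: "r < 1" unfolding r_def by auto
  have upper: "(\<Sum>i<n. w i * cmod (tf \<rho> (P i)) ^ k) \<le> alpha n E w + Wt * r ^ k"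
    if rho: "density_matrix d \<rho>" for \<rho> k
  proof -
    define x where "x i = cmod (tf \<rho> (P i))" for i
    define J where "J = {i. i < n \<and> x i ^ 2 > 1/2}"
    have x1: "x i \<le> 1" if "i < n" for i
      unfolding x_def by (rule single_bound[OF rho Pc[OF that] Ph[OF that] Psq[OF that]])
    have indJ: "independent_set n E J"
      unfolding independent_set_def
    proof (intro conjI ballI)
      show "J \<subseteq> {0..<n}" unfolding J_def by auto
    next
      fix i j assume i: "i \<in> J" and j: "j \<in> J"
      show "\<not> E i j"
      proof
        assume e: "E i j"
        have "i < n" "j < n" using i j unfolding J_def by auto
        from pair_bound[OF rho Pc[OF \<open>i<n\<close>] Ph[OF \<open>i<n\<close>] Psq[OF \<open>i<n\<close>] Pc[OF \<open>j<n\<close>] Ph[OF \<open>j<n\<close>] Psq[OF \<open>j<n\<close>] anti[OF \<open>i<n\<close> \<open>j<n\<close> e]]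
        have "x i ^ 2 + x j ^ 2 \<le> 1" unfolding x_def .
        thus False using i j unfolding J_def by auto
      qed
    qed
    have tm: "w i * x i ^ k \<le> (if i \<in> J then w i else 0) + w i * r ^ k" if i: "i < n" for i
    proof -
      have wi: "w i \<ge> 0" using W i by auto
      have xi0: "x i \<ge> 0" unfolding x_def by simp
      show ?thesis
      proof (cases "i \<in> J")
        case True
        have "x i ^ k \<le> 1" using x1[OF i] xi0 by (simp add: power_le_one)
        hence "w i * x i ^ k \<le> w i" using wi by (simp add: mult_left_le)
        moreover have "0 \<le> w i * r ^ k" using wi r0 by simp
        ultimately show ?thesis using True by simp
      next
        case False
        hence "x i ^ 2 \<le> 1/2" using i unfolding J_def by auto
        hence "x i \<le> r" unfolding r_def by (rule real_le_rsqrt)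
        hence "x i ^ k \<le> r ^ k" using xi0 by (intro power_mono) auto
        hence "w i * x i ^ k \<le> w i * r ^ k" using wi by (intro mult_left_mono) auto
        thus ?thesis using False by simp
      qed
    qed
    have "(\<Sum>i<n. w i * cmod (tf \<rho> (P i)) ^ k) = (\<Sum>i<n. w i * x i ^ k)" unfolding x_def by simp
    also have "\<dots> \<le> (\<Sum>i<n. (if i \<in> J then w i else 0) + w i * r ^ k)"
      by (intro sum_mono tm) simp
    also have "\<dots> = (\<Sum>i<n. (if i \<in> J then w i else 0)) + Wt * r ^ k"
      unfolding Wt_def by (simp add: sum.distrib sum_distrib_right)
    also have "(\<Sum>i<n. (if i \<in> J then w i else 0)) = (\<Sum>i\<in>J. w i)"
    proof -
      have "(\<Sum>i<n. (if i \<in> J then w i else 0)) = (\<Sum>i\<in>{..<n} \<inter> J. w i)"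
        by (simp add: sum.inter_restrict)
      also have "{..<n} \<inter> J = J" unfolding J_def by auto
      finally show ?thesis .
    qed
    also have "(\<Sum>i\<in>J. w i) \<le> alpha n E w" by (rule alpha_ge[OF indJ])
    finally show ?thesis by simp
  qed
  obtain \<rho>0 where rho0: "density_matrix d \<rho>0" and t0: "\<forall>i\<in>I0. cmod (tf \<rho>0 (P i)) = 1"
  proof -
    have I0n: "I0 \<subseteq> {0..<n}" and I0e: "\<forall>i\<in>I0. \<forall>j\<in>I0. \<not> E i j"
      using I0 unfolding independent_set_def by auto
    have finI0: "finite I0" using I0n finite_subset by blast
    have h1: "\<forall>i\<in>I0. P i \<in> carrier_mat d d \<and> P i * P i = 1\<^sub>m d" using I0n Pc Psq by auto
    have h2: "\<forall>i\<in>I0. \<forall>j\<in>I0. P i * P j = P j * P i"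
    proof (intro ballI)
      fix i j assume ij: "i \<in> I0" "j \<in> I0"
      have "i < n" "j < n" using ij I0n by auto
      moreover have "\<not> E i j" using ij I0e by blast
      ultimately show "P i * P j = P j * P i" by (rule comm)
    qed
    obtain M s where M: "M \<in> carrier_mat d d" and M0: "M \<noteq> 0\<^sub>m d d"
      and Ms: "\<forall>i\<in>I0. (s i = 1 \<or> s i = (-1::complex)) \<and> P i * M = s i \<cdot>\<^sub>m M"
      using mp[OF mp[OF common_eig[OF d0 finI0, of P] h1] h2] by blast
    have "\<forall>i\<in>I0. P i \<in> carrier_mat d d \<and> P i * M = s i \<cdot>\<^sub>m M" using h1 Ms by blast
    from eig_density[OF M M0 this] obtain \<rho> where rho: "density_matrix d \<rho>" and ts: "\<forall>i\<in>I0. tf \<rho> (P i) = s i"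
      by blast
    have "\<forall>i\<in>I0. cmod (tf \<rho> (P i)) = 1"
    proof
      fix i assume i: "i \<in> I0"
      have "s i = 1 \<or> s i = -1" using Ms i by blast
      thus "cmod (tf \<rho> (P i)) = 1" using ts i by auto
    qed
    thus ?thesis using that rho by blast
  qed
  have I0n: "I0 \<subseteq> {..<n}" using I0 unfolding independent_set_def by auto
  define B where "B k = {(\<Sum>i<n. w i * cmod (tf \<rho> (P i)) ^ k) | \<rho>. density_matrix d \<rho>}" for k
  have beta_eq: "beta n S w k = Sup (B k)" for k
    unfolding beta_def B_def tf_def P_def d_def by simp
  have bnds: "alpha n E w \<le> beta n S w k \<and> beta n S w k \<le> alpha n E w + Wt * r ^ k" for k
  proof -
    have mem: "(\<Sum>i<n. w i * cmod (tf \<rho>0 (P i)) ^ k) \<in> B k" unfolding B_def using rho0 by blast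
    have bdd: "bdd_above (B k)"
      unfolding B_def bdd_above_def using upper by blast
    have ne: "B k \<noteq> {}" using mem by blast
    have "alpha n E w = (\<Sum>i\<in>I0. w i * cmod (tf \<rho>0 (P i)) ^ k)"
      unfolding aI0 using t0 by simp
    also have "\<dots> \<le> (\<Sum>i<n. w i * cmod (tf \<rho>0 (P i)) ^ k)"
      by (rule sum_mono2) (use I0n W in auto)
    also have "\<dots> \<le> Sup (B k)" by (rule cSup_upper[OF mem bdd])
    finally have lo: "alpha n E w \<le> beta n S w k" unfolding beta_eq .
    have hi: "Sup (B k) \<le> alpha n E w + Wt * r ^ k"
      by (rule cSup_least[OF ne]) (use upper in \<open>auto simp: B_def\<close>)
    show ?thesis using lo hi unfolding beta_eq by simp
  qed
  have lim: "(\<lambda>k. alpha n E w + Wt * r ^ Suc k) \<longlonglongrightarrow> alpha n E w + Wt * 0"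
  proof (intro tendsto_intros)
    have "(\<lambda>k. r ^ k) \<longlonglongrightarrow> 0" using r0 r1 by (intro LIMSEQ_power_zero) auto
    thus "(\<lambda>k. r ^ Suc k) \<longlonglongrightarrow> 0" by (rule LIMSEQ_Suc)
  qed
  show ?thesis
  proof (rule tendsto_sandwich[of "\<lambda>k. alpha n E w" _ _ "\<lambda>k. alpha n E w + Wt * r ^ Suc k"])
    show "\<forall>\<^sub>F k in sequentially. alpha n E w \<le> beta n S w (Suc k)" using bnds by simp
    show "\<forall>\<^sub>F k in sequentially. beta n S w (Suc k) \<le> alpha n E w + Wt * r ^ Suc k"
      by (rule always_eventually) (use bnds in blast)
    show "(\<lambda>k. alpha n E w) \<longlonglongrightarrow> alpha n E w" by simp
    show "(\<lambda>k. alpha n E w + Wt * r ^ Suc k) \<longlonglongrightarrow> alpha n E w" using lim by simp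
  qed
qed
end
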